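(* (i) If $(b_0,\dots,b_{m+1})\in X_m(\mathbb C)$ (indices of $b$ taken modulo $m+2$), then $T_i(k):=P_i(b_{\frac{k-i}{2}},\dots,b_{\frac{k+i-2}{2}})$ defines a solution of the $T$-system of level $m$, and for generic $(b_j)$ this solution is nonvanishing. (ii) Every nonvanishing solution of the $T$-system of level $m$ is of this form for a unique $(b_0,\dots,b_{m+1})\in X_m(\mathbb C)$.
   Context: Let $m\ge1$, $J=\begin{pmatrix} i&0\\1&i\end{pmatrix}$, $B(b)=\begin{pmatrix}1&b\\0&-1\end{pmatrix}$. $X_m\subset\mathbb A^{m+2}$ (coordinates $b_0,\dots,b_{m+1}$) is cut out by $B(b_0)JB(b_1)J\cdots B(b_{m+1})J=-1$. The polynomials $P_r$ are defined by $P_0=1$, $P_1(b_1)=b_1$, $P_r(b_1,\dots,b_r)=P_{r-1}(b_1,\dots,b_{r-1})b_r-P_{r-2}(b_1,\dots,b_{r-2})$; $P_i(a_1,\dots,a_i)$ denotes $P_i$ evaluated at the listed $i$ arguments. A solution of the $T$-system of level $m$ is a collection of complex numbers $T_i(k)$, $0\le i\le m$, $k\in\mathbb Z$, $i+k$ even, with $T_0(k)=T_m(k)=1$ for all $k$ and $T_i(k-1)T_i(k+1)=T_{i-1}(k)T_{i+1}(k)+1$ for $1\le i\le m-1$; it is nonvanishing if all $T_i(k)\neq0$. *)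

theory Defs
  imports "HOL-Analysis.Analysis"
begin

definition Jmat :: "complex^2^2" where
  "Jmat = vector [vector [\<i>, 0], vector [1, \<i>]]"

definition Bmat :: "complex \<Rightarrow> complex^2^2" where
  "Bmat b = vector [vector [1, b], vector [0, -1]]"

text \<open>Points of X_m: b_0..b_{m+1} stored as b 0, ..., b (m+1); b j = 0 for j > m+1
  (padding, so that points correspond exactly to C^(m+2)).
  Condition: B(b_0) J B(b_1) J ... B(b_{m+1}) J = -1.\<close>
definition Xm :: "nat \<Rightarrow> (nat \<Rightarrow> complex) set" where
  "Xm m = {b. (\<forall>j\<ge>m+2. b j = 0) \<and>
     foldr (\<lambda>j M. (Bmat (b j) ** Jmat) ** M) [0..<m+2] (mat 1) = - mat 1}"

fun P :: "nat \<Rightarrow> (nat \<Rightarrow> complex) \<Rightarrow> complex" where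
  "P 0 a = 1"
| "P (Suc 0) a = a 1"
| "P (Suc (Suc r)) a = P (Suc r) a * a (Suc (Suc r)) - P r a"

definition Tb :: "nat \<Rightarrow> (nat \<Rightarrow> complex) \<Rightarrow> nat \<Rightarrow> int \<Rightarrow> complex" where
  "Tb m b i k = P i (\<lambda>j. b (nat (((k - int i) div 2 + int j - 1) mod int (m + 2))))"

text \<open>Solution of the T-system of level m; only values with i \<le> m, i+k even matter.\<close>
definition T_solution :: "nat \<Rightarrow> (nat \<Rightarrow> int \<Rightarrow> complex) \<Rightarrow> bool" where
  "T_solution m T \<longleftrightarrow>
     (\<forall>k. even k \<longrightarrow> T 0 k = 1) \<and>
     (\<forall>k. even (int m + k) \<longrightarrow> T m k = 1) \<and>
     (\<forall>i k. 1 \<le> i \<and> i + 1 \<le> m \<and> odd (int i + k) \<longrightarrow>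
        T i (k - 1) * T i (k + 1) = T (i - 1) k * T (i + 1) k + 1)"

definition T_nonvanishing :: "nat \<Rightarrow> (nat \<Rightarrow> int \<Rightarrow> complex) \<Rightarrow> bool" where
  "T_nonvanishing m T \<longleftrightarrow> (\<forall>i k. i \<le> m \<and> even (int i + k) \<longrightarrow> T i k \<noteq> 0)"

end

theory Submission imports Defs "HOL-Complex_Analysis.Conformal_Mappings" begin

definition mat2 :: "complex \<Rightarrow> complex \<Rightarrow> complex \<Rightarrow> complex \<Rightarrow> complex^2^2" where
  "mat2 a b c d = vector [vector [a,b], vector [c,d]]"

lemma mat2_nth: "mat2 a b c d $ 1 $ 1 = a" "mat2 a b c d $ 1 $ 2 = b"
  "mat2 a b c d $ 2 $ 1 = c" "mat2 a b c d $ 2 $ 2 = d"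
  by (simp_all add: mat2_def)

lemma mat2_eta: "A = mat2 (A$1$1) (A$1$2) (A$2$1) (A$2$2)"
  by (simp add: vec_eq_iff forall_2 mat2_nth)

lemma mat2_eq_iff: "mat2 a b c d = mat2 a' b' c' d' \<longleftrightarrow> a = a' \<and> b = b' \<and> c = c' \<and> d = d'"
  by (metis mat2_nth)

lemma mat2_mult: "mat2 a b c d ** mat2 a' b' c' d' = mat2 (a*a'+b*c') (a*b'+b*d') (c*a'+d*c') (c*b'+d*d')"
  by (simp add: vec_eq_iff forall_2 mat2_nth matrix_matrix_mult_def sum_2)

lemma mat2_one: "mat 1 = mat2 1 0 0 1"
  by (simp add: vec_eq_iff forall_2 mat2_nth mat_def)

lemma mat2_neg: "- mat2 a b c d = mat2 (-a) (-b) (-c) (-d)"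
  by (simp add: vec_eq_iff forall_2 mat2_nth)

lemma mat2_det: "det (mat2 a b c d) = a*d - b*c"
  by (simp add: det_2 mat2_nth)

lemma Bmat_mat2: "Bmat b = mat2 1 b 0 (-1)" by (simp add: Bmat_def mat2_def)
lemma Jmat_mat2: "Jmat = mat2 \<i> 0 1 \<i>" by (simp add: Jmat_def mat2_def)

definition N2 :: "complex \<Rightarrow> complex^2^2" where "N2 b = mat2 b 1 (-1) 0"
definition Smat :: "complex^2^2" where "Smat = mat2 1 (-\<i>) 0 1"
definition Sinv :: "complex^2^2" where "Sinv = mat2 1 \<i> 0 1"

lemma BJ_conj: "Bmat b ** Jmat = Smat ** N2 b ** Sinv"
  by (simp add: Bmat_mat2 Jmat_mat2 Smat_def Sinv_def N2_def mat2_mult algebra_simps mat2_eq_iff)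

lemma S_Sinv: "Smat ** Sinv = mat 1" "Sinv ** Smat = mat 1"
  by (simp_all add: Smat_def Sinv_def mat2_mult mat2_one)

fun prodN :: "(int \<Rightarrow> complex) \<Rightarrow> int \<Rightarrow> nat \<Rightarrow> complex^2^2" where
  "prodN c s 0 = mat 1"
| "prodN c s (Suc r) = prodN c s r ** N2 (c (s + int r))"

definition W :: "(int \<Rightarrow> complex) \<Rightarrow> int \<Rightarrow> nat \<Rightarrow> complex" where
  "W c s = (\<lambda>j. c (s + int j - 1))"

definition ext :: "nat \<Rightarrow> (nat \<Rightarrow> complex) \<Rightarrow> int \<Rightarrow> complex" where
  "ext n b x = b (nat (x mod int n))"

lemma prodN_formula:
  "prodN c s (Suc (Suc r)) = mat2 (P (r+2) (W c s)) (P (r+1) (W c s))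
      (- P (r+1) (W c (s+1))) (- P r (W c (s+1)))"
proof (induction r)
  case 0
  show ?case by (simp add: mat2_one N2_def mat2_mult W_def numeral_2_eq_2 mat2_eq_iff add.commute)
next
  case (Suc r)
  have e1: "W c s (r+3) = c (s + int (Suc (Suc r)))" by (simp add: W_def algebra_simps)
  have e2: "W c (s+1) (r+2) = c (s + int (Suc (Suc r)))" by (simp add: W_def algebra_simps)
  have "prodN c s (Suc (Suc (Suc r))) = prodN c s (Suc (Suc r)) ** N2 (c (s + int (Suc (Suc r))))"
    by simp
  also have "\<dots> = mat2 (P (Suc r+2) (W c s)) (P (Suc r+1) (W c s))
      (- P (Suc r+1) (W c (s+1))) (- P (Suc r) (W c (s+1)))"
    unfolding Suc N2_def mat2_mult mat2_eq_iff
    using e1 e2 by (simp add: numeral_3_eq_3 numeral_2_eq_2 algebra_simps)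
  finally show ?case .
qed

lemma prodN_one: "prodN c s (Suc 0) = N2 (c s)" by simp

lemma prodN_split: "prodN c s (a + r) = prodN c s a ** prodN c (s + int a) r"
  by (induction r) (simp_all add: matrix_mul_assoc algebra_simps)

lemma prodN_left: "prodN c s (Suc r) = N2 (c s) ** prodN c (s + 1) r"
  using prodN_split[of c s 1 r] by simp

lemma det_N2: "det (N2 b) = 1" by (simp add: N2_def mat2_det)

lemma det_prodN: "det (prodN c s r) = 1"
  by (induction r) (simp_all add: det_mul det_N2)

lemma continuant:
  assumes "i \<ge> 1"
  shows "P i (W c s) * P i (W c (s+1)) - P (i+1) (W c s) * P (i-1) (W c (s+1)) = 1"
proof -
  obtain r where i: "i = Suc r" using assms by (cases i) auto
  have "det (prodN c s (Suc (Suc r))) = 1" by (rule det_prodN)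
  then show ?thesis unfolding prodN_formula mat2_det i by (simp add: algebra_simps)
qed

lemma foldr_mult: "foldr (\<lambda>j M. A j ** M) xs X = foldr (\<lambda>j M. A j ** M) xs (mat 1) ** X"
  by (induction xs) (simp_all add: matrix_mul_assoc)

lemma foldr_prodN:
  "foldr (\<lambda>j M. (Bmat (b j) ** Jmat) ** M) [0..<r] (mat 1)
     = Smat ** prodN (\<lambda>x. b (nat x)) 0 r ** Sinv"
proof (induction r)
  case 0
  then show ?case by (simp add: S_Sinv)
next
  case (Suc r)
  have "foldr (\<lambda>j M. (Bmat (b j) ** Jmat) ** M) [0..<Suc r] (mat 1)
     = foldr (\<lambda>j M. (Bmat (b j) ** Jmat) ** M) [0..<r] (mat 1) ** (Bmat (b r) ** Jmat)"
    by (simp add: foldr_mult[of _ _ "Bmat (b r) ** Jmat"])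
  also have "\<dots> = Smat ** prodN (\<lambda>x. b (nat x)) 0 r ** Sinv ** (Smat ** N2 (b r) ** Sinv)"
    using Suc.IH[unfolded BJ_conj] by (simp add: BJ_conj)
  also have "\<dots> = Smat ** (prodN (\<lambda>x. b (nat x)) 0 r ** (Sinv ** Smat) ** N2 (b r)) ** Sinv"
    by (simp add: matrix_mul_assoc)
  also have "\<dots> = Smat ** prodN (\<lambda>x. b (nat x)) 0 (Suc r) ** Sinv"
    by (simp add: S_Sinv)
  finally show ?case .
qed

lemma mmul_rneg: "(A::complex^2^2) ** (- B) = - (A ** B)"
  by (simp add: vec_eq_iff matrix_matrix_mult_def sum_negf)
lemma mmul_lneg: "(- A::complex^2^2) ** B = - (A ** B)"
  by (simp add: vec_eq_iff matrix_matrix_mult_def sum_negf)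

lemma conj_neg_one: "Smat ** Q ** Sinv = - mat 1 \<longleftrightarrow> Q = - mat 1"
proof
  assume h: "Smat ** Q ** Sinv = - mat 1"
  have "Q = Sinv ** (Smat ** Q ** Sinv) ** Smat"
    by (simp add: matrix_mul_assoc S_Sinv) (simp add: matrix_mul_assoc[symmetric] S_Sinv)
  also have "\<dots> = - mat 1" by (simp add: h mmul_lneg mmul_rneg S_Sinv)
  finally show "Q = - mat 1" .
next
  assume "Q = - mat 1"
  then show "Smat ** Q ** Sinv = - mat 1"
    by (simp add: mmul_lneg mmul_rneg S_Sinv)
qed

lemma prodN_cong: "(\<And>j. j < r \<Longrightarrow> c (s + int j) = c' (s + int j)) \<Longrightarrow> prodN c s r = prodN c' s r"
  by (induction r) auto

lemma Xm_iff: "b \<in> Xm m \<longleftrightarrow> (\<forall>j\<ge>m+2. b j = 0) \<and> prodN (ext (m+2) b) 0 (m+2) = - mat 1"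
proof -
  have "prodN (\<lambda>x. b (nat x)) 0 (m+2) = prodN (ext (m+2) b) 0 (m+2)"
    by (rule prodN_cong) (simp add: ext_def)
  then show ?thesis unfolding Xm_def foldr_prodN conj_neg_one by auto
qed

lemma Tb_W: "Tb m b i k = P i (W (ext (m+2) b) ((k - int i) div 2))"
  by (simp add: Tb_def W_def ext_def)

definition N2inv :: "complex \<Rightarrow> complex^2^2" where "N2inv b = mat2 0 (-1) 1 b"
lemma N2inv: "N2inv b ** N2 b = mat 1" "N2 b ** N2inv b = mat 1"
  by (simp_all add: N2inv_def N2_def mat2_mult mat2_one)

lemma prodN_shift:
  assumes per: "\<And>x. c (x + int n) = c x" and h: "prodN c s n = - mat 1"
  shows "prodN c (s+1) n = - mat 1"
proof -
  have "N2 (c s) ** prodN c (s+1) n = prodN c s (Suc n)" by (rule prodN_left[symmetric])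
  also have "\<dots> = - N2 (c s)" using per[of s] by (simp add: h mmul_lneg matrix_mul_lid add.commute[of "int n"])
  finally have e: "N2 (c s) ** prodN c (s+1) n = - N2 (c s)" .
  have "prodN c (s+1) n = N2inv (c s) ** (N2 (c s) ** prodN c (s+1) n)"
    by (simp only: matrix_mul_assoc N2inv matrix_mul_lid)
  also have "\<dots> = - mat 1" by (simp add: e mmul_rneg N2inv)
  finally show ?thesis .
qed

lemma prodN_shift_back:
  assumes per: "\<And>x. c (x + int n) = c x" and h: "prodN c (s+1) n = - mat 1"
  shows "prodN c s n = - mat 1"
proof -
  have "prodN c s n ** N2 (c s) = prodN c s (Suc n)" using per[of s] by (simp add: add.commute[of "int n"])
  also have "\<dots> = - N2 (c s)" unfolding prodN_left h mmul_rneg by simp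
  finally have e: "prodN c s n ** N2 (c s) = - N2 (c s)" .
  have "prodN c s n = (prodN c s n ** N2 (c s)) ** N2inv (c s)"
    by (simp only: matrix_mul_assoc[symmetric] N2inv matrix_mul_rid)
  also have "\<dots> = - mat 1" by (simp add: e mmul_lneg N2inv)
  finally show ?thesis .
qed

lemma prodN_all:
  assumes per: "\<And>x. c (x + int n) = c x" and h: "prodN c 0 n = - mat 1"
  shows "prodN c s n = - mat 1"
proof (induction s rule: int_induct[where k=0])
  case base then show ?case by (rule h)
next
  case (step1 i) then show ?case using prodN_shift[of c n i, OF per] by blast
next
  case (step2 i) then show ?case using prodN_shift_back[of c n "i - 1", OF per] by simp
qed

lemma ext_per: "n > 0 \<Longrightarrow> ext n b (x + int n) = ext n b x"
  by (simp add: ext_def)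

lemma Xm_all:
  assumes "b \<in> Xm m"
  shows "prodN (ext (m+2) b) s (m+2) = - mat 1"
proof (rule prodN_all[where c="ext (m+2) b"])
  show "prodN (ext (m + 2) b) 0 (m + 2) = - mat 1" using assms unfolding Xm_iff by blast
  fix x show "ext (m + 2) b (x + int (m + 2)) = ext (m + 2) b x" by (rule ext_per) simp
qed

lemma Xm_Pm:
  assumes "b \<in> Xm m"
  shows "P m (W (ext (m+2) b) s) = 1"
proof -
  have "prodN (ext (m+2) b) (s-1) (Suc (Suc m)) = - mat 1"
    using Xm_all[OF assms, of "s-1"] by (simp only: add_2_eq_Suc')
  then have "mat2 (P (m+2) (W (ext (m+2) b) (s-1))) (P (m+1) (W (ext (m+2) b) (s-1)))
      (- P (m+1) (W (ext (m+2) b) (s-1+1))) (- P m (W (ext (m+2) b) (s-1+1))) = mat2 (-1) 0 0 (-1)"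
    unfolding prodN_formula mat2_one mat2_neg by simp
  then show ?thesis unfolding mat2_eq_iff by simp
qed

lemma part1:
  assumes "b \<in> Xm m"
  shows "T_solution m (Tb m b)"
  unfolding T_solution_def
proof (intro conjI allI impI)
  fix k :: int
  show "Tb m b 0 k = 1" by (simp add: Tb_W)
  show "Tb m b m k = 1" by (simp only: Tb_W Xm_Pm[OF assms])
next
  fix i :: nat and k :: int
  assume h: "1 \<le> i \<and> i + 1 \<le> m \<and> odd (int i + k)"
  define c where "c = ext (m+2) b"
  define s where "s = (k - 1 - int i) div 2"
  have ev: "even (k - 1 - int i)" using h by presburger
  have s2: "(k + 1 - int i) div 2 = s + 1" using ev unfolding s_def by presburger
  have s1: "(k - 1 - int i) div 2 = s" by (simp add: s_def)
  have ii: "int (i - 1) = int i - 1" using h by simp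
  have s3: "(k - int (i - 1)) div 2 = s + 1" using ev unfolding s_def ii by presburger
  have s4: "(k - int (i + 1)) div 2 = s" unfolding s_def by (simp add: algebra_simps)
  have "P i (W c s) * P i (W c (s+1)) - P (i+1) (W c s) * P (i-1) (W c (s+1)) = 1"
    using h by (intro continuant) simp
  moreover have "Tb m b i (k - 1) = P i (W c s)" unfolding Tb_W c_def[symmetric] s1[symmetric]
    by (simp add: algebra_simps)
  moreover have "Tb m b i (k + 1) = P i (W c (s+1))" unfolding Tb_W c_def[symmetric] s2[symmetric]
    by (simp add: algebra_simps)
  moreover have "Tb m b (i - 1) k = P (i-1) (W c (s+1))" unfolding Tb_W c_def[symmetric] s3[symmetric]
    by simp
  moreover have "Tb m b (i + 1) k = P (i+1) (W c s)" unfolding Tb_W c_def[symmetric] s4[symmetric]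
    by simp
  ultimately show "Tb m b i (k - 1) * Tb m b i (k + 1) = Tb m b (i - 1) k * Tb m b (i + 1) k + 1"
    by (simp add: algebra_simps)
qed

lemma per_mult:
  assumes per: "\<And>x. c (x + int n) = c x"
  shows "c (x + int n * q) = c x"
proof (induction q rule: int_induct[where k=0])
  case base then show ?case by simp
next
  case (step1 i)
  have "c (x + int n * (i + 1)) = c ((x + int n * i) + int n)" by (simp add: algebra_simps)
  then show ?case using per step1 by simp
next
  case (step2 i)
  have "c (x + int n * i) = c ((x + int n * (i - 1)) + int n)" by (simp add: algebra_simps)
  then show ?case using per step2 by simp
qed

lemma per_mod:
  assumes per: "\<And>x. c (x + int n) = c x"
  shows "c x = c (x mod int n)"
proof -
  have "x = x mod int n + int n * (x div int n)" by simp
  then show ?thesis using per_mult[of c n "x mod int n" "x div int n", OF per] by metis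
qed

lemma W_1: "P 1 (W c s) = c s" by (simp add: W_def)

lemma Tb_1: "j < m + 2 \<Longrightarrow> Tb m b 1 (2 * int j + 1) = b j"
  by (simp add: Tb_W W_def ext_def)

lemma part2:
  assumes m1: "m \<ge> 1" and sol: "T_solution m T" and nv: "T_nonvanishing m T"
  shows "\<exists>!b. b \<in> Xm m \<and> (\<forall>i k. i \<le> m \<and> even (int i + k) \<longrightarrow> T i k = Tb m b i k)"
proof -
  define n where "n = m + 2"
  define c where "c = (\<lambda>s::int. T 1 (2 * s + 1))"
  have T0: "\<And>k. even k \<Longrightarrow> T 0 k = 1" and Tm: "\<And>k. even (int m + k) \<Longrightarrow> T m k = 1"
    and rec: "\<And>i k. 1 \<le> i \<Longrightarrow> i + 1 \<le> m \<Longrightarrow> odd (int i + k) \<Longrightarrow>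
        T i (k - 1) * T i (k + 1) = T (i - 1) k * T (i + 1) k + 1"
    using sol unfolding T_solution_def by auto
  have nz: "\<And>i k. i \<le> m \<Longrightarrow> even (int i + k) \<Longrightarrow> T i k \<noteq> 0"
    using nv unfolding T_nonvanishing_def by auto
  have main: "\<And>k. i \<le> m \<Longrightarrow> even (int i + k) \<Longrightarrow> T i k = P i (W c ((k - int i) div 2))" for i
  proof (induction i rule: less_induct)
    case (less i)
    show ?case
    proof (cases "i \<le> 1")
      case True
      then consider "i = 0" | "i = 1" by linarith
      then show ?thesis
      proof cases
        case 1 then show ?thesis using T0 less.prems by simp
      next
        case 2
        have "2 * ((k - 1) div 2) + 1 = k" using less.prems 2 by presburger
        then show ?thesis using 2 by (simp add: W_def c_def add.commute)
      qed
    next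
      case False
      then obtain j where j: "i = j + 1" "j \<ge> 1" by (metis add.commute le_add_diff_inverse2 nat_le_linear not_less_eq_eq plus_1_eq_Suc)
      define s where "s = (k - 1 - int j) div 2"
      have ev: "even (k - 1 - int j)" using less.prems j by presburger
      have s2: "(k + 1 - int j) div 2 = s + 1" using ev unfolding s_def by presburger
      have s1: "(k - 1 - int j) div 2 = s" by (simp add: s_def)
      have ii: "int (j - 1) = int j - 1" using j by simp
      have s3: "(k - int (j - 1)) div 2 = s + 1" using ev unfolding s_def ii by presburger
      have s4: "(k - int i) div 2 = s" unfolding s_def j by (simp add: algebra_simps)
      have IH1: "T j (k - 1) = P j (W c s)"
        using less.IH[of j "k-1"] less.prems j s1 by (simp add: algebra_simps)
      have IH2: "T j (k + 1) = P j (W c (s+1))"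
        using less.IH[of j "k+1"] less.prems j s2 ev by (simp add: algebra_simps)
      have ev3: "even (int (j - 1) + k)" using ev ii by presburger
      have IH3: "T (j - 1) k = P (j-1) (W c (s+1))"
        using less.IH[of "j-1" k] less.prems j s3 ev3 by simp
      have nz3: "T (j - 1) k \<noteq> 0" using nz[of "j-1" k] less.prems j ev3 by simp
      have r: "T j (k - 1) * T j (k + 1) = T (j - 1) k * T i k + 1"
        using rec[of j k] j less.prems ev by (simp add: algebra_simps)
      have co: "P j (W c s) * P j (W c (s+1)) - P i (W c s) * P (j-1) (W c (s+1)) = 1"
        using continuant[of j c s] j by simp
      have "T (j - 1) k * T i k = T (j - 1) k * P i (W c s)"
        using r co IH1 IH2 IH3 by (simp add: algebra_simps) metis
      then show ?thesis using nz3 s4 by simp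
    qed
  qed
  have Pm: "P m (W c s) = 1" for s
  proof -
    have "T m (2 * s + int m) = 1" by (intro Tm) presburger
    moreover have "(2 * s + int m - int m) div 2 = s" by simp
    ultimately show ?thesis using main[of m "2 * s + int m"] by simp
  qed
  have Pm1: "P (m - 1) (W c s) \<noteq> 0" for s
  proof -
    have ev: "even (int (m - 1) + (2 * s + int m - 1))" using m1 by (simp add: of_nat_diff)
    have "(2 * s + int m - 1 - int (m - 1)) div 2 = s" using m1 by (simp add: of_nat_diff)
    then show ?thesis using main[of "m-1" "2 * s + int m - 1"] nz[of "m-1" "2 * s + int m - 1"] ev
      by simp
  qed
  have Pm2: "P (m + 1) (W c s) = 0" for s
  proof -
    have "P m (W c s) * P m (W c (s+1)) - P (m+1) (W c s) * P (m-1) (W c (s+1)) = 1"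
      using continuant[of m c s] m1 by simp
    then have "P (m+1) (W c s) * P (m-1) (W c (s+1)) = 0" using Pm by simp
    then show ?thesis using Pm1 by simp
  qed
  have Pm3: "P (m + 2) (W c s) = -1" for s
  proof -
    have "P (m+1) (W c s) * P (m+1) (W c (s+1)) - P (m+1+1) (W c s) * P (m+1-1) (W c (s+1)) = 1"
      using continuant[of "m+1" c s] by simp
    then show ?thesis using Pm Pm2 by (simp add: add.assoc [symmetric] numeral_2_eq_2 minus_equation_iff del: P.simps)
  qed
  have prodc: "prodN c s n = - mat 1" for s
  proof -
    have "prodN c s (Suc (Suc m)) = - mat 1"
      unfolding prodN_formula mat2_one mat2_neg mat2_eq_iff using Pm Pm2 Pm3 by simp
    then show ?thesis by (simp add: n_def)
  qed
  have per: "c (x + int n) = c x" for x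
  proof -
    have "N2 (c x) ** prodN c (x+1) n = prodN c x (Suc n)" by (rule prodN_left[symmetric])
    also have "\<dots> = prodN c x n ** N2 (c (x + int n))" by simp
    finally have "- N2 (c x) = - N2 (c (x + int n))" unfolding prodc mmul_lneg mmul_rneg by simp
    then have "N2 (c x) = N2 (c (x + int n))" by simp
    then show ?thesis unfolding N2_def mat2_eq_iff by simp
  qed
  define b where "b = (\<lambda>j. if j < n then c (int j) else 0)"
  have extb: "ext n b = c"
  proof
    fix x
    have "ext n b x = c (x mod int n)" unfolding ext_def b_def
      by (simp add: n_def nat_less_iff)
    then show "ext n b x = c x" using per_mod[of c n x, OF per] by simp
  qed
  have bX: "b \<in> Xm m" unfolding Xm_iff
  proof
    show "\<forall>j\<ge>m + 2. b j = 0" by (simp add: b_def n_def)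
    show "prodN (ext (m + 2) b) 0 (m + 2) = - mat 1" using extb prodc[of 0] by (simp only: n_def)
  qed
  have bT: "\<forall>i k. i \<le> m \<and> even (int i + k) \<longrightarrow> T i k = Tb m b i k"
    using main extb by (simp add: Tb_W n_def)
  show ?thesis
  proof (rule ex1I[of _ b])
    show "b \<in> Xm m \<and> (\<forall>i k. i \<le> m \<and> even (int i + k) \<longrightarrow> T i k = Tb m b i k)"
      using bX bT by blast
  next
    fix b' assume h: "b' \<in> Xm m \<and> (\<forall>i k. i \<le> m \<and> even (int i + k) \<longrightarrow> T i k = Tb m b' i k)"
    show "b' = b"
    proof
      fix j
      show "b' j = b j"
      proof (cases "j < n")
        case True
        have ev: "even (int 1 + (2 * int j + 1))" by presburger
        have "b' j = T 1 (2 * int j + 1)" using h m1 ev Tb_1[of j m b'] True by (simp add: n_def)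
        moreover have "b j = T 1 (2 * int j + 1)" using bT m1 ev Tb_1[of j m b] True by (simp add: n_def)
        ultimately show ?thesis by simp
      next
        case False
        then show ?thesis using h bX unfolding Xm_def by (simp add: n_def)
      qed
    qed
  qed
qed

lemma sin_rec: "sin (real (r+3) * \<theta>) = 2 * cos \<theta> * sin (real (r+2) * \<theta>) - sin (real (r+1) * \<theta>)"
proof -
  have a: "real (r+3) * \<theta> = real (r+2) * \<theta> + \<theta>" by (simp add: algebra_simps)
  have b: "real (r+1) * \<theta> = real (r+2) * \<theta> - \<theta>" by (simp add: algebra_simps)
  show ?thesis unfolding a b sin_add sin_diff by (simp add: algebra_simps)
qed

lemma Pconst:
  assumes "sin \<theta> \<noteq> 0"
  shows "P r (\<lambda>_. complex_of_real (2 * cos \<theta>)) = complex_of_real (sin (real (r+1) * \<theta>) / sin \<theta>)"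
proof (induction r rule: nat_less_induct)
  case (1 r)
  show ?case
  proof (cases r)
    case 0 then show ?thesis using assms by simp
  next
    case (Suc r')
    show ?thesis
    proof (cases r')
      case 0
      have "real (Suc 0 + 1) * \<theta> = 2 * \<theta>" by simp
      have sd: "sin (\<theta> * 2) = 2 * sin \<theta> * cos \<theta>" by (metis sin_double mult.commute)
      show ?thesis using assms Suc 0 by (simp add: sd field_simps)
    next
      case (Suc q)
      have r: "r = Suc (Suc q)" using Suc \<open>r = Suc r'\<close> by simp
      have h1: "P (Suc q) (\<lambda>_. complex_of_real (2 * cos \<theta>)) = complex_of_real (sin (real (q+2) * \<theta>) / sin \<theta>)"
        using 1[rule_format, of "Suc q"] r by simp
      have h0: "P q (\<lambda>_. complex_of_real (2 * cos \<theta>)) = complex_of_real (sin (real (q+1) * \<theta>) / sin \<theta>)"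
        using 1[rule_format, of q] r by simp
      have "P r (\<lambda>_. complex_of_real (2 * cos \<theta>)) =
          complex_of_real (sin (real (q+2) * \<theta>) / sin \<theta> * (2 * cos \<theta>) - sin (real (q+1) * \<theta>) / sin \<theta>)"
        unfolding r P.simps(3) h1 h0 by simp
      also have "\<dots> = complex_of_real (sin (real (q+3) * \<theta>) / sin \<theta>)"
        unfolding sin_rec[of q \<theta>] using assms by (simp add: field_simps)
      finally show ?thesis unfolding r by (simp add: add.commute)
    qed
  qed
qed

definition gval :: "nat \<Rightarrow> complex" where "gval m = complex_of_real (2 * cos (pi / real (m+2)))"
definition gpt :: "nat \<Rightarrow> nat \<Rightarrow> complex" where "gpt m = (\<lambda>j. if j < m+2 then gval m else 0)"

lemma ext_gpt: "ext (m+2) (gpt m) = (\<lambda>_. gval m)"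
  by (rule ext) (simp add: ext_def gpt_def nat_less_iff)

lemma W_const: "W (\<lambda>_. a) s = (\<lambda>_. a)" by (simp add: W_def)

lemma theta_pos: "0 < pi / real (m+2)" by simp

lemma theta_lt: assumes "r \<le> m" shows "real (r+1) * (pi / real (m+2)) < pi"
proof -
  have "real (r+1) * pi < real (m+2) * pi" using assms by (intro mult_strict_right_mono) auto
  then show ?thesis by (simp add: field_simps)
qed

lemma P_gval:
  "P r (\<lambda>_. gval m) = complex_of_real (sin (real (r+1) * (pi / real (m+2))) / sin (pi / real (m+2)))"
proof -
  have "sin (pi / real (m+2)) > 0" using theta_lt[of 0 m] theta_pos[of m] by (intro sin_gt_zero) auto
  then show ?thesis unfolding gval_def by (intro Pconst) simp
qed

lemma P_gval_nz:
  assumes "r \<le> m"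
  shows "P r (\<lambda>_. gval m) \<noteq> 0"
proof -
  have "sin (real (r+1) * (pi / real (m+2))) > 0"
    using assms theta_lt[of r m] theta_pos[of m] by (intro sin_gt_zero) auto
  moreover have "sin (pi / real (m+2)) > 0" using theta_lt[of 0 m] theta_pos[of m] by (intro sin_gt_zero) auto
  ultimately show ?thesis unfolding P_gval by simp
qed

lemma gpt_X: "gpt m \<in> Xm m"
  unfolding Xm_iff
proof
  show "\<forall>j\<ge>m + 2. gpt m j = 0" by (simp add: gpt_def)
  define \<theta> where "\<theta> = pi / real (m+2)"
  have sp: "sin \<theta> > 0" unfolding \<theta>_def using theta_lt[of 0 m] theta_pos[of m] by (intro sin_gt_zero) auto
  have a1: "real (m+2+1) * \<theta> = pi + \<theta>" unfolding \<theta>_def by (simp add: field_simps)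
  have a2: "real (m+1+1) * \<theta> = pi" unfolding \<theta>_def by (simp add: field_simps)
  have a3: "real (m+1) * \<theta> = pi - \<theta>" unfolding \<theta>_def by (simp add: field_simps)
  have "prodN (ext (m + 2) (gpt m)) 0 (Suc (Suc m)) = - mat 1"
    unfolding prodN_formula ext_gpt W_const mat2_one mat2_neg mat2_eq_iff P_gval \<theta>_def[symmetric]
    unfolding a1 a2 a3 using sp by (simp add: sin_add)
  then show "prodN (ext (m + 2) (gpt m)) 0 (m + 2) = - mat 1" by simp
qed

lemma gpt_m: "m \<ge> 1 \<Longrightarrow> gpt m m \<noteq> 0"
  using P_gval_nz[of 1 m] by (simp add: gpt_def)

lemma prodN_3: "prodN c s 3 = mat2 (c s * c (s+1) * c (s+2) - c s - c (s+2)) (c s * c (s+1) - 1)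
   (1 - c (s+1) * c (s+2)) (- c (s+1))"
  by (simp add: numeral_3_eq_3 N2_def mat2_one mat2_mult mat2_eq_iff algebra_simps)

lemma inv_neg0:
  assumes dd: "a*d - b*c = 1" and h: "mat2 a b c d ** Q = - mat 1"
  shows "Q = mat2 (-d) b c (-a)"
proof -
  have "mat2 d (-b) (-c) a ** mat2 a b c d = mat 1" unfolding mat2_one mat2_mult mat2_eq_iff
    using dd by (simp add: algebra_simps)
  then have "Q = mat2 d (-b) (-c) a ** (mat2 a b c d ** Q)" by (simp only: matrix_mul_assoc matrix_mul_lid)
  also have "\<dots> = mat2 (-d) b c (-a)"
    unfolding h mat2_one mat2_neg mat2_mult by simp
  finally show ?thesis .
qed

lemma inv_neg:
  assumes d: "det A = 1" and h: "A ** Q = - mat 1"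
  shows "Q = mat2 (-(A$2$2)) (A$1$2) (A$2$1) (-(A$1$1))"
  using inv_neg0[of "A$1$1" "A$2$2" "A$1$2" "A$2$1" Q] d h mat2_eta[of A] by (simp add: det_2)

lemma inv_neg2:
  assumes d: "det A = 1"
  shows "A ** mat2 (-(A$2$2)) (A$1$2) (A$2$1) (-(A$1$1)) = - mat 1"
proof -
  have dd: "A$1$1 * A$2$2 - A$1$2 * A$2$1 = 1" using d by (simp add: det_2)
  have "mat2 (A$1$1) (A$1$2) (A$2$1) (A$2$2) ** mat2 (-(A$2$2)) (A$1$2) (A$2$1) (-(A$1$1)) = - mat 1"
    unfolding mat2_one mat2_neg mat2_mult mat2_eq_iff using dd by (simp add: algebra_simps)
  then show ?thesis using mat2_eta[of A] by simp
qed

lemma ext_lt: "j < n \<Longrightarrow> ext n b (int j) = b j"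
  by (simp add: ext_def)

lemma recover:
  assumes X: "b \<in> Xm m" and m1: "m \<ge> 1"
  defines "A \<equiv> prodN (ext (m+2) b) 0 (m-1)"
  shows "A$1$1 = b m \<and> (b m \<noteq> 0 \<longrightarrow> b (m-1) = (A$1$2 + 1)/A$1$1 \<and> b (m+1) = (1 - A$2$1)/A$1$1)"
proof -
  have mm: "m + 2 = (m - 1) + 3" using m1 by simp
  have "prodN (ext (m+2) b) 0 (m+2) = A ** prodN (ext (m+2) b) (int (m-1)) 3"
    unfolding A_def by (subst mm) (simp only: prodN_split, simp)
  moreover have "ext (m+2) b (int (m-1)) = b (m-1)" by (rule ext_lt) simp
  moreover have "ext (m+2) b (int (m-1) + 1) = b m"
    using ext_lt[of m "m+2" b] m1 by (simp add: of_nat_diff)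
  moreover have "ext (m+2) b (int (m-1) + 2) = b (m+1)"
    using ext_lt[of "m+1" "m+2" b] m1 by (simp add: of_nat_diff add.commute)
  ultimately have "A ** mat2 (b (m-1) * b m * b (m+1) - b (m-1) - b (m+1)) (b (m-1) * b m - 1)
      (1 - b m * b (m+1)) (- b m) = - mat 1"
    using Xm_iff X prodN_3 by metis
  then have "mat2 (b (m-1) * b m * b (m+1) - b (m-1) - b (m+1)) (b (m-1) * b m - 1)
      (1 - b m * b (m+1)) (- b m) = mat2 (-(A$2$2)) (A$1$2) (A$2$1) (-(A$1$1))"
    by (intro inv_neg) (simp_all add: A_def det_prodN)
  then have e: "b m = A$1$1" "b (m-1) * b m - 1 = A$1$2" "1 - b m * b (m+1) = A$2$1"
    unfolding mat2_eq_iff by auto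
  show ?thesis using e by (auto simp: field_simps)
qed

definition bt :: "nat \<Rightarrow> (nat \<Rightarrow> complex) \<Rightarrow> complex \<Rightarrow> nat \<Rightarrow> complex" where
  "bt m b t j = b j + t * (gpt m j - b j)"

definition Am :: "nat \<Rightarrow> (nat \<Rightarrow> complex) \<Rightarrow> complex \<Rightarrow> complex^2^2" where
  "Am m b t = prodN (ext (m+2) (bt m b t)) 0 (m-1)"

definition gam :: "nat \<Rightarrow> (nat \<Rightarrow> complex) \<Rightarrow> complex \<Rightarrow> nat \<Rightarrow> complex" where
  "gam m b t j = (if j < m-1 then bt m b t j
     else if j = m-1 then (Am m b t $1$2 + 1) / Am m b t $1$1
     else if j = m then Am m b t $1$1
     else if j = m+1 then (1 - Am m b t $2$1) / Am m b t $1$1 else 0)"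

lemma gam_X:
  assumes m1: "m \<ge> 1" and nz: "Am m b t $1$1 \<noteq> 0"
  shows "gam m b t \<in> Xm m"
  unfolding Xm_iff
proof
  show "\<forall>j\<ge>m + 2. gam m b t j = 0" using m1 by (auto simp: gam_def)
  define A where "A = Am m b t"
  have mm: "m + 2 = (m - 1) + 3" using m1 by simp
  define c where "c = ext (m+2) (gam m b t)"
  have sp: "prodN c 0 (m+2) = prodN c 0 (m-1) ** prodN c (int (m-1)) 3"
    by (subst mm) (simp only: prodN_split, simp)
  have pA: "prodN c 0 (m-1) = A"
    unfolding A_def Am_def c_def
    by (rule prodN_cong) (simp add: ext_lt gam_def)
  have f1: "m \<noteq> m - Suc 0" "\<not> m < m - Suc 0" "Suc m \<noteq> m - Suc 0" "\<not> Suc m < m - Suc 0"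
    using m1 by auto
  have cx: "c (int (m-1)) = (A$1$2 + 1) / A$1$1"
    unfolding c_def by (subst ext_lt) (simp_all add: gam_def A_def)
  have cy: "c (int (m-1) + 1) = A$1$1"
    using ext_lt[of m "m+2" "gam m b t"] m1 unfolding c_def by (simp add: of_nat_diff gam_def A_def f1)
  have cz: "c (int (m-1) + 2) = (1 - A$2$1) / A$1$1"
    using ext_lt[of "m+1" "m+2" "gam m b t"] m1 unfolding c_def by (simp add: of_nat_diff add.commute gam_def A_def f1)
  have dA: "det A = 1" unfolding A_def Am_def by (rule det_prodN)
  then have dd: "A$1$1 * A$2$2 - A$1$2 * A$2$1 = 1" by (simp add: det_2)
  have nzA: "A$1$1 \<noteq> 0" using nz by (simp add: A_def)
  have p3: "prodN c (int (m-1)) 3 = mat2 (-(A$2$2)) (A$1$2) (A$2$1) (-(A$1$1))"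
    unfolding prodN_3 cx cy cz mat2_eq_iff using nzA dd
    by (simp add: field_simps)
  have "prodN (ext (m+2) (gam m b t)) 0 (m+2) = A ** mat2 (-(A$2$2)) (A$1$2) (A$2$1) (-(A$1$1))"
    using sp pA p3 unfolding c_def by simp
  also have "\<dots> = - mat 1" by (rule inv_neg2) (simp add: A_def Am_def det_prodN)
  finally show "prodN (ext (m+2) (gam m b t)) 0 (m+2) = - mat 1" .
qed

lemma gam_eq:
  assumes X: "b \<in> Xm m" and m1: "m \<ge> 1" and bm: "b m \<noteq> 0" and bt: "\<And>j. j < m+2 \<Longrightarrow> bt m b' t j = b j"
  shows "gam m b' t = b"
proof
  fix j
  have A: "Am m b' t = prodN (ext (m+2) b) 0 (m-1)"
    unfolding Am_def by (rule prodN_cong) (simp add: ext_lt bt)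
  have r: "Am m b' t $1$1 = b m \<and> b (m-1) = (Am m b' t$1$2 + 1)/Am m b' t$1$1 \<and>
     b (m+1) = (1 - Am m b' t$2$1)/Am m b' t$1$1"
    using recover[OF X m1] bm unfolding A by simp
  have z: "j \<ge> m+2 \<Longrightarrow> b j = 0" using X unfolding Xm_def by simp
  show "gam m b' t j = b j"
    using r z m1 bt[of j] by (auto simp: gam_def)
qed

lemma P_holo:
  assumes "\<And>j. (\<lambda>t. a t j) holomorphic_on S"
  shows "(\<lambda>t. P r (a t)) holomorphic_on S"
proof (induction r rule: less_induct)
  case (less r)
  show ?case
  proof (cases r)
    case 0 then show ?thesis by (simp add: holomorphic_on_const)
  next
    case (Suc r')
    show ?thesis
    proof (cases r')
      case 0 then show ?thesis using Suc assms by simp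
    next
      case (Suc q)
      then have r: "r = Suc (Suc q)" using \<open>r = Suc r'\<close> by simp
      show ?thesis unfolding r P.simps
        using less.IH[of "Suc q"] less.IH[of q] assms[of "Suc (Suc q)"] r
        by (intro holomorphic_intros) auto
    qed
  qed
qed

lemma N2_holo:
  assumes "f holomorphic_on S"
  shows "(\<lambda>t. N2 (f t) $ k $ l) holomorphic_on S"
  using assms exhaust_2[of k] exhaust_2[of l]
  by (auto simp: N2_def mat2_nth holomorphic_on_const)

lemma prodN_holo:
  assumes "\<And>x. (\<lambda>t. c t x) holomorphic_on S"
  shows "(\<lambda>t. prodN (c t) s r $ i $ j) holomorphic_on S"
proof (induction r arbitrary: i j)
  case 0
  show ?case by (simp add: mat_def holomorphic_on_const)
next
  case (Suc r)
  show ?case unfolding prodN.simps matrix_matrix_mult_def vec_lambda_beta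
    by (intro holomorphic_intros Suc N2_holo assms)
qed

definition Gf :: "nat \<Rightarrow> (nat \<Rightarrow> complex) \<Rightarrow> complex" where
  "Gf m c = (\<Prod>i\<in>{..m}. \<Prod>s\<in>{..<m+2}. P i (W (ext (m+2) c) (int s)))"

lemma W_mod: "W (ext n c) s = W (ext n c) (s mod int n)"
proof
  fix j
  have "(s + int j - 1) mod int n = (s mod int n + int j - 1) mod int n"
    by (metis add_diff_eq mod_add_left_eq)
  then show "W (ext n c) s j = W (ext n c) (s mod int n) j" by (simp add: W_def ext_def)
qed

lemma good_of:
  assumes "Gf m c \<noteq> 0"
  shows "T_nonvanishing m (Tb m c)"
  unfolding T_nonvanishing_def
proof (intro allI impI)
  fix i k assume h: "i \<le> m \<and> even (int i + k)"
  define s where "s = nat (((k - int i) div 2) mod int (m+2))"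
  have s: "s < m + 2" "int s = ((k - int i) div 2) mod int (m+2)" unfolding s_def by (simp_all add: nat_less_iff)
  have "P i (W (ext (m+2) c) (int s)) \<noteq> 0" using assms h s(1) unfolding Gf_def
    by (metis (no_types, lifting) atMost_iff finite_atMost finite_lessThan lessThan_iff prod_zero_iff)
  then show "Tb m c i k \<noteq> 0" unfolding Tb_W using W_mod[of "m+2" c "(k - int i) div 2"] s(2) by simp
qed

lemma bt_holo: "(\<lambda>t. bt m b t j) holomorphic_on S"
  unfolding bt_def by (intro holomorphic_intros)

lemma Am_holo: "(\<lambda>t. Am m b t $ i $ j) holomorphic_on S"
  unfolding Am_def by (intro prodN_holo) (simp add: ext_def bt_holo)

lemma gam_holo:
  assumes "\<And>t. t \<in> S \<Longrightarrow> Am m b t $1$1 \<noteq> 0"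
  shows "(\<lambda>t. gam m b t j) holomorphic_on S"
  unfolding gam_def
  by (cases "j < m-1"; cases "j = m-1"; cases "j = m"; cases "j = m+1")
     (auto intro!: holomorphic_on_divide holomorphic_on_add holomorphic_on_diff holomorphic_on_const Am_holo bt_holo simp: assms)

lemma Gf_holo:
  assumes "\<And>t. t \<in> S \<Longrightarrow> Am m b t $1$1 \<noteq> 0"
  shows "(\<lambda>t. Gf m (gam m b t)) holomorphic_on S"
  unfolding Gf_def
  by (intro holomorphic_on_prod P_holo) (simp add: W_def ext_def gam_holo assms)

definition Sg :: "nat \<Rightarrow> (nat \<Rightarrow> complex) set" where
  "Sg m = {c \<in> Xm m. T_nonvanishing m (Tb m c)}"

lemma bt0: "bt m b 0 = b" by (rule ext) (simp add: bt_def)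
lemma bt1: "bt m b 1 = gpt m" by (rule ext) (simp add: bt_def)

lemma Gf_gpt: "Gf m (gpt m) \<noteq> 0"
  unfolding Gf_def ext_gpt W_const using P_gval_nz by simp

lemma dense_at:
  assumes m1: "m \<ge> 1" and X: "b \<in> Xm m" and bm: "b m \<noteq> 0"
  shows "b \<in> closure (Sg m)"
proof -
  define Y where "Y = (\<lambda>t. Am m b t $1$1)"
  define U where "U = {t. Y t \<noteq> 0}"
  have Yh: "Y holomorphic_on UNIV" unfolding Y_def by (rule Am_holo)
  have Y0: "Y 0 = b m"
    using recover[OF X m1] unfolding Y_def Am_def bt0 by simp
  have Y1: "Y 1 = gpt m m"
    using recover[OF gpt_X m1] unfolding Y_def Am_def bt1 by simp
  have U0: "0 \<in> U" using Y0 bm by (simp add: U_def)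
  have U1: "1 \<in> U" using Y1 gpt_m[OF m1] by (simp add: U_def)
  have oU: "open U" unfolding U_def
    by (rule open_Collect_neq) (auto intro: holomorphic_on_imp_continuous_on[OF Yh])
  have cntbl: "countable {t. Y t = 0}"
  proof (cases "Y constant_on UNIV")
    case True
    then have "{t. Y t = 0} = {}" using Y0 bm unfolding constant_on_def by auto
    then show ?thesis by simp
  next
    case False
    have "countable {z\<in>UNIV. Y z = 0}"
      by (rule holomorphic_countable_zeros[OF Yh]) (use False in auto)
    then show ?thesis by simp
  qed
  have cU: "connected U"
  proof -
    have "U = - {t. Y t = 0}" unfolding U_def by auto
    then show ?thesis using path_connected_complement_countable[OF _ cntbl]
      by (simp add: path_connected_imp_connected)
  qed
  have hU: "\<And>t. t \<in> U \<Longrightarrow> Am m b t $1$1 \<noteq> 0" unfolding U_def Y_def by simp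
  define G where "G = (\<lambda>t. Gf m (gam m b t))"
  have Gh: "G holomorphic_on U" unfolding G_def by (rule Gf_holo) (rule hU)
  have g1: "gam m b 1 = gpt m"
    by (rule gam_eq[OF gpt_X m1 gpt_m[OF m1]]) (simp add: bt1)
  have G1: "G 1 \<noteq> 0" unfolding G_def g1 by (rule Gf_gpt)
  have g0: "gam m b 0 = b"
    by (rule gam_eq[OF X m1 bm]) (simp add: bt0)
  have nl: "\<not> 0 islimpt {t \<in> U. G t = 0}"
  proof
    assume "0 islimpt {t \<in> U. G t = 0}"
    then have "G 1 = 0"
    proof (rule analytic_continuation[OF Gh oU cU _ U0, rotated])
      show "{t \<in> U. G t = 0} \<subseteq> U" by blast
      show "\<And>z. z \<in> {t \<in> U. G t = 0} \<Longrightarrow> G z = 0" by blast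
      show "1 \<in> U" by (rule U1)
    qed
    then show False using G1 by simp
  qed
  have ev1: "eventually (\<lambda>t. t \<notin> {t \<in> U. G t = 0}) (at 0)"
    using nl unfolding islimpt_iff_eventually by simp
  have ev2: "eventually (\<lambda>t. t \<in> U) (at 0)" by (rule eventually_at_in_open'[OF oU U0])
  have ev: "eventually (\<lambda>t. gam m b t \<in> Sg m) (at 0)"
    using ev1 ev2
  proof eventually_elim
    case (elim t)
    then have "G t \<noteq> 0" "t \<in> U" by auto
    then have "gam m b t \<in> Xm m" "T_nonvanishing m (Tb m (gam m b t))"
      using gam_X[OF m1 hU] good_of unfolding G_def by auto
    then show ?case unfolding Sg_def by blast
  qed
  have "continuous_on U (\<lambda>t. gam m b t j)" for j
    by (rule holomorphic_on_imp_continuous_on, rule gam_holo, rule hU)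
  then have cont: "continuous_on U (gam m b)"
    by (rule continuous_on_coordinatewise_then_product)
  then have "isCont (gam m b) 0" using continuous_on_eq_continuous_at[OF oU] U0 by blast
  then have lim: "(gam m b \<longlongrightarrow> b) (at 0)" using g0 by (metis isContD)
  have ev': "eventually (\<lambda>t. gam m b t \<in> closure (Sg m)) (at 0)"
    using ev by (rule eventually_mono) (rule closure_subset[THEN subsetD])
  show ?thesis
    by (rule Lim_in_closed_set[OF closed_closure ev' at_neq_bot lim])
qed

definition rot :: "nat \<Rightarrow> (nat \<Rightarrow> complex) \<Rightarrow> nat \<Rightarrow> complex" where
  "rot m b = (\<lambda>j. if j < m+2 then b ((j+1) mod (m+2)) else 0)"

lemma ext_rot: "ext (m+2) (rot m b) x = ext (m+2) b (x+1)"
proof -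
  define n where "n = m + 2"
  have lt: "nat (x mod int n) < n" unfolding n_def by (simp add: nat_less_iff)
  have "int ((nat (x mod int n) + 1) mod n) = (x mod int n + 1) mod int n"
    by (simp add: zmod_int n_def add.commute)
  also have "\<dots> = (x + 1) mod int n" by (simp add: mod_add_left_eq)
  finally have "(nat (x mod int n) + 1) mod n = nat ((x + 1) mod int n)" by linarith
  then show ?thesis using lt unfolding ext_def rot_def n_def by simp
qed

lemma prodN_shift1: "prodN (\<lambda>x. c (x+1)) s r = prodN c (s+1) r"
  by (induction r) (simp_all add: algebra_simps)

lemma W_shift1: "W (\<lambda>x. c (x+1)) s = W c (s+1)"
  by (simp add: W_def algebra_simps)

lemma rot_X: "b \<in> Xm m \<Longrightarrow> rot m b \<in> Xm m"
  unfolding Xm_iff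
proof
  assume X: "(\<forall>j\<ge>m + 2. b j = 0) \<and> prodN (ext (m + 2) b) 0 (m + 2) = - mat 1"
  show "\<forall>j\<ge>m + 2. rot m b j = 0" by (simp add: rot_def)
  have "b \<in> Xm m" using X unfolding Xm_iff by blast
  then show "prodN (ext (m + 2) (rot m b)) 0 (m + 2) = - mat 1"
    unfolding ext_rot[abs_def] using prodN_shift1[of "ext (m+2) b" 0 "m+2"] Xm_all[of b m 1] by simp
qed

lemma rot_S: "b \<in> Sg m \<Longrightarrow> rot m b \<in> Sg m"
  unfolding Sg_def T_nonvanishing_def
proof (safe)
  assume "b \<in> Xm m" then show "rot m b \<in> Xm m" by (rule rot_X)
next
  fix i k
  assume nv: "\<forall>i k. i \<le> m \<and> even (int i + k) \<longrightarrow> Tb m b i k \<noteq> 0"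
    and h: "i \<le> m" "even (int i + k)" and z: "Tb m (rot m b) i k = 0"
  have "(k + 2 - int i) div 2 = (k - int i) div 2 + 1" by simp
  then have "Tb m (rot m b) i k = Tb m b i (k+2)"
    unfolding Tb_W ext_rot[abs_def] W_shift1 by simp
  moreover have "even (int i + (k+2))" using h by simp
  ultimately show False using nv h z by metis
qed

lemma rot_cont: "continuous_on UNIV (rot m)"
proof -
  have "continuous_on UNIV (\<lambda>b. rot m b j)" for j
    by (cases "j < m+2") (simp_all add: rot_def continuous_on_const)
  then show ?thesis by (rule continuous_on_coordinatewise_then_product)
qed

lemma rot_pow: "\<forall>j\<ge>m+2. b j = 0 \<Longrightarrow> (rot m ^^ q) b j = (if j < m+2 then b ((j+q) mod (m+2)) else 0)"
proof (induction q arbitrary: j)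
  case 0 then show ?case by simp
next
  case (Suc q)
  show ?case
  proof (cases "j < m+2")
    case True
    have lt: "(j+1) mod (m+2) < m+2" by simp
    have e: "((j+1) mod (m+2) + q) mod (m+2) = (j + Suc q) mod (m+2)"
      by (simp add: mod_add_left_eq)
    have "(rot m ^^ Suc q) b j = (rot m ^^ q) b ((j+1) mod (m+2))"
      using True by (simp add: rot_def)
    also have "\<dots> = b ((j + Suc q) mod (m+2))" using Suc.IH[of "(j+1) mod (m+2)"] Suc.prems lt e by simp
    finally show ?thesis using True by simp
  next
    case False then show ?thesis by (simp add: rot_def)
  qed
qed

lemma rot_pow_X: "b \<in> Xm m \<Longrightarrow> (rot m ^^ q) b \<in> Xm m"
  by (induction q) (simp_all add: rot_X)

lemma rot_pow_cont: "continuous_on UNIV (rot m ^^ q)"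
proof (induction q)
  case 0 then show ?case by (simp add: continuous_on_id)
next
  case (Suc q)
  have "continuous_on UNIV (rot m \<circ> (rot m ^^ q))"
    by (rule continuous_on_compose[OF Suc]) (rule continuous_on_subset[OF rot_cont], simp)
  then show ?case by simp
qed

lemma rot_pow_closure: "(rot m ^^ q) ` closure (Sg m) \<subseteq> closure (Sg m)"
proof (rule image_closure_subset)
  show "continuous_on (closure (Sg m)) (rot m ^^ q)"
    by (rule continuous_on_subset[OF rot_pow_cont]) simp
  show "closed (closure (Sg m))" by simp
  have "(rot m ^^ q) b \<in> Sg m" if "b \<in> Sg m" for b
    using that by (induction q) (simp_all add: rot_S)
  then show "(rot m ^^ q) ` Sg m \<subseteq> closure (Sg m)" using closure_subset by blast
qed

lemma dense_nz:
  assumes m1: "m \<ge> 1" and X: "b \<in> Xm m" and j0: "j0 < m+2" "b j0 \<noteq> 0"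
  shows "b \<in> closure (Sg m)"
proof -
  have z: "\<forall>j\<ge>m+2. b j = 0" using X unfolding Xm_def by simp
  define b' where "b' = (rot m ^^ (j0+2)) b"
  have "m + (j0 + 2) = j0 + (m+2)" by simp
  then have "(m + (j0 + 2)) mod (m+2) = j0" using j0 by (simp only: mod_add_self2) simp
  then have b'm: "b' m \<noteq> 0" unfolding b'_def using rot_pow[OF z, of "j0+2" m] j0 by simp
  have b'X: "b' \<in> Xm m" unfolding b'_def by (rule rot_pow_X[OF X])
  have cl: "b' \<in> closure (Sg m)" by (rule dense_at[OF m1 b'X b'm])
  define q where "q = (m+1) * (j0+2)"
  have "(rot m ^^ q) b' = (rot m ^^ (q + (j0+2))) b" unfolding b'_def by (simp only: funpow_add comp_def)
  also have "\<dots> = b"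
  proof
    fix j
    have "(j + (q + (j0+2))) mod (m+2) = j mod (m+2)"
    proof -
      have "j + (q + (j0+2)) = j + (j0+2) * (m+2)" unfolding q_def by (simp add: algebra_simps)
      then show ?thesis by (simp only: mod_mult_self1)
    qed
    moreover have r: "(rot m ^^ (q + (j0+2))) b j = (if j < m+2 then b ((j + (q + (j0+2))) mod (m+2)) else 0)"
      by (rule rot_pow[OF z])
    ultimately show "(rot m ^^ (q + (j0 + 2))) b j = b j" unfolding r using z by auto
  qed
  finally have "b \<in> (rot m ^^ q) ` closure (Sg m)" using cl by (metis image_eqI)
  then show ?thesis using rot_pow_closure by blast
qed

definition dl :: "complex \<Rightarrow> nat \<Rightarrow> complex" where
  "dl t = (\<lambda>j. if j = 1 then t else if j = 3 then -t else 0)"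

lemma prodN4: "c 0 = 0 \<Longrightarrow> c 1 = t \<Longrightarrow> c 2 = 0 \<Longrightarrow> c 3 = -t \<Longrightarrow> prodN c 0 4 = mat 1"
  by (simp add: numeral_eq_Suc N2_def mat2_one mat2_mult mat2_eq_iff)

lemma dl_prod:
  assumes m2: "m \<ge> 2"
  shows "prodN (ext (m+2) (dl t)) 0 (m+2) = prodN (ext (m+2) (dl 0)) 0 (m+2)"
proof -
  have mm: "m + 2 = 4 + (m - 2)" using m2 by simp
  have p4: "prodN (ext (m+2) (dl s)) 0 4 = mat 1" for s
  proof (rule prodN4[where t=s])
    show "ext (m + 2) (dl s) 0 = 0" using ext_lt[of 0 "m+2" "dl s"] by (simp add: dl_def)
    show "ext (m + 2) (dl s) 1 = s" using ext_lt[of 1 "m+2" "dl s"] by (simp add: dl_def)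
    show "ext (m + 2) (dl s) 2 = 0" using ext_lt[of 2 "m+2" "dl s"] m2 by (simp add: dl_def)
    show "ext (m + 2) (dl s) 3 = -s" using ext_lt[of 3 "m+2" "dl s"] m2 by (simp add: dl_def)
  qed
  have tl: "prodN (ext (m+2) (dl t)) 4 (m-2) = prodN (ext (m+2) (dl 0)) 4 (m-2)"
  proof (rule prodN_cong)
    fix j assume "j < m - 2"
    then have "4 + j < m + 2" by simp
    then show "ext (m+2) (dl t) (4 + int j) = ext (m+2) (dl 0) (4 + int j)"
      using ext_lt[of "4+j" "m+2" "dl t"] ext_lt[of "4+j" "m+2" "dl 0"] by (simp add: dl_def)
  qed
  have sp: "prodN (ext (m+2) (dl s)) 0 (m+2) = prodN (ext (m+2) (dl s)) 4 (m-2)" for s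
  proof -
    have "prodN (ext (m+2) (dl s)) 0 (m+2) = prodN (ext (m+2) (dl s)) 0 (4 + (m-2))"
      by (rule arg_cong[OF mm])
    also have "\<dots> = prodN (ext (m+2) (dl s)) 0 4 ** prodN (ext (m+2) (dl s)) (0 + int 4) (m-2)"
      by (rule prodN_split)
    finally show ?thesis using p4[of s] by simp
  qed
  show ?thesis using sp[of t] sp[of 0] tl by simp
qed

lemma dense_all:
  assumes m1: "m \<ge> 1" and X: "b \<in> Xm m"
  shows "b \<in> closure (Sg m)"
proof (cases "\<exists>j0<m+2. b j0 \<noteq> 0")
  case True
  then show ?thesis using dense_nz[OF m1 X] by blast
next
  case False
  have z: "\<forall>j\<ge>m+2. b j = 0" using X unfolding Xm_def by simp
  have b0: "b = dl 0"
  proof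
    fix j show "b j = dl 0 j" using False z by (cases "j < m+2") (auto simp: dl_def)
  qed
  have m2: "m \<ge> 2"
  proof (rule ccontr)
    assume "\<not> m \<ge> 2"
    then have "m = 1" using m1 by simp
    have "P m (W (ext (m+2) b) 1) = 1" by (rule Xm_Pm[OF X])
    moreover have "P m (W (ext (m+2) b) 1) = 0" using \<open>m = 1\<close> b0 by (simp add: W_def ext_def dl_def)
    ultimately show False by simp
  qed
  have dX: "dl t \<in> Xm m" for t
    unfolding Xm_iff
  proof
    show "\<forall>j\<ge>m + 2. dl t j = 0" using m2 by (simp add: dl_def)
    show "prodN (ext (m + 2) (dl t)) 0 (m + 2) = - mat 1"
      using dl_prod[OF m2, of t] X b0 unfolding Xm_iff by simp
  qed
  have ev: "eventually (\<lambda>t. dl t \<in> closure (Sg m)) (at 0)"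
  proof (rule eventually_mono[OF eventually_at_in_open[of UNIV 0]])
    fix t :: complex assume "t \<in> UNIV - {0}"
    then have "dl t 1 \<noteq> 0" by (simp add: dl_def)
    then show "dl t \<in> closure (Sg m)" by (intro dense_nz[OF m1 dX, of 1]) auto
  qed auto
  have "continuous_on UNIV (\<lambda>t. dl t j)" for j
    by (cases "j = 1"; cases "j = 3") (simp_all add: dl_def continuous_on_const continuous_on_id continuous_on_minus)
  then have "continuous_on UNIV dl" by (rule continuous_on_coordinatewise_then_product)
  then have "isCont dl 0" by (simp add: continuous_on_eq_continuous_at)
  then have lim: "(dl \<longlongrightarrow> b) (at 0)" using b0 by (metis isContD)
  show ?thesis by (rule Lim_in_closed_set[OF closed_closure ev at_neq_bot lim])
qed

theorem proposition4p32:
  fixes m :: nat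
  assumes "m \<ge> 1"
  shows "(\<forall>b \<in> Xm m. T_solution m (Tb m b))
       \<and> (\<forall>b \<in> Xm m. b \<in> closure {c \<in> Xm m. T_nonvanishing m (Tb m c)})
       \<and> (\<forall>T. T_solution m T \<and> T_nonvanishing m T \<longrightarrow>
            (\<exists>!b. b \<in> Xm m \<and> (\<forall>i k. i \<le> m \<and> even (int i + k) \<longrightarrow> T i k = Tb m b i k)))"
  using part1 dense_all[OF assms] part2[OF assms] unfolding Sg_def by blast

end
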